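(* Let $G$ be a finitely generated group hyperbolic relative to a finite collection $\mathcal P$, $S$ a finite generating set, and $(\epsilon,R,D)$ thin-triangle constants. Let $U\subset V\cup W$ be a finite subset that is $6D$-convex with respect to some $b\in U$. Then for every $n\ge 7D$, the subgraph of the $n$-Rips graph $\Gamma_n$ induced on $U$ is dismantlable.
   Context: $\Gamma$ is the Cayley graph of $G$ w.r.t. $S$, $V=G$, $W$ the set of cosets $gP_\lambda$; relative hyperbolicity means the coned-off Cayley graph (vertex set $V\cup W$, edges of $\Gamma$ plus edges $(v,w)$ for $v\in w$) is fine and $\delta$-hyperbolic. $|\cdot,\cdot|_S$ is extended to $V\cup W$ via distances in $\Gamma$ between corresponding elements/cosets. $\Gamma_n$ has vertex set $V\cup W$ and an edge between $u\ne u'$ whenever $|u,u'|_S\le n$. For a geodesic edge-path $p=(p_j)_{j=0}^\ell$ in $\Gamma$, $p_i$ is $(\epsilon,R)$-deep in $w\in W$ if $R\le i\le\ell-R$ and $|p_j,w|_S\le\epsilon$ for all $|j-i|\le R$. A geodesic from $a$ to $b$ ($a,b\in V\cup W$) is a geodesic in $\Gamma$ of length $|a,b|_S$ starting at $a$ (if $a\in V$) or in $a$ (if $a\in W$), ending analogously at $b$; for $i>\ell$, $p_i:=p_\ell$. Positive integers $(\epsilon,R,D)$ are thin-triangle constants if: $D\ge\epsilon$; no vertex of a geodesic in $\Gamma$ is $(\epsilon,R)$-deep in two distinct cosets; and for all $a,b,c\in V\cup W$ with $a\ne b$, geodesics $p^{ab},p^{bc},p^{ac}$, $\ell=|a,b|_S$,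 $0\le i\le\ell$, with $z=w$ if $p^{ab}_i$ is $(\epsilon,R)$-deep in $w$ and $z=p^{ab}_i$ otherwise, we have $|z,p^{ac}_i|_S\le D$ or $|z,p^{bc}_{\ell-i}|_S\le D$. A subset $U\subset V\cup W$ is $\nu$-convex with respect to $u\in U$ if for every $u'\in U$, every geodesic $(p_j)_{j=0}^\ell$ from $u$ to $u'$ in $\Gamma$ and every $j\le\ell-\nu$: $p_j\in U$, and every $w\in W$ with $|w,p_j|_S\le\epsilon$ lies in $U$. In a graph, a vertex $a$ is dominated by an adjacent vertex $z\ne a$ if every vertex adjacent to $a$ is also adjacent to $z$. A finite graph is dismantlable if its vertices can be ordered $a_1,\ldots,a_k$ so that for each $i<k$, $a_i$ is dominated in the subgraph induced on $\{a_i,\ldots,a_k\}$. *)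

theory Defs
  imports "HOL-Algebra.Algebra"
begin

definition walk :: "('v \<Rightarrow> 'v \<Rightarrow> bool) \<Rightarrow> (nat \<Rightarrow> 'v) \<Rightarrow> nat \<Rightarrow> bool" where
  "walk E p n \<longleftrightarrow> (\<forall>i<n. E (p i) (p (Suc i)))"

definition gdist :: "('v \<Rightarrow> 'v \<Rightarrow> bool) \<Rightarrow> 'v \<Rightarrow> 'v \<Rightarrow> nat" where
  "gdist E x y = (LEAST n. \<exists>p. walk E p n \<and> p 0 = x \<and> p n = y)"

definition ggeod :: "('v \<Rightarrow> 'v \<Rightarrow> bool) \<Rightarrow> (nat \<Rightarrow> 'v) \<Rightarrow> nat \<Rightarrow> bool" where
  "ggeod E p n \<longleftrightarrow> walk E p n \<and> gdist E (p 0) (p n) = n"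

definition circuit :: "'v set \<Rightarrow> ('v \<Rightarrow> 'v \<Rightarrow> bool) \<Rightarrow> 'v list \<Rightarrow> bool" where
  "circuit V E c \<longleftrightarrow> length c \<ge> 3 \<and> distinct c \<and> set c \<subseteq> V \<and>
     (\<forall>i<length c. E (c ! i) (c ! ((i + 1) mod length c)))"

definition edge_in :: "'v \<Rightarrow> 'v \<Rightarrow> 'v list \<Rightarrow> bool" where
  "edge_in u v c \<longleftrightarrow> (\<exists>i<length c. {c ! i, c ! ((i + 1) mod length c)} = {u, v})"

definition fine_graph :: "'v set \<Rightarrow> ('v \<Rightarrow> 'v \<Rightarrow> bool) \<Rightarrow> bool" where
  "fine_graph V E \<longleftrightarrow> (\<forall>u\<in>V. \<forall>v\<in>V. E u v \<longrightarrow>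
      (\<forall>n. finite {c. circuit V E c \<and> length c = n \<and> edge_in u v c}))"

definition hyperbolic_graph :: "'v set \<Rightarrow> ('v \<Rightarrow> 'v \<Rightarrow> bool) \<Rightarrow> nat \<Rightarrow> bool" where
  "hyperbolic_graph V E \<delta> \<longleftrightarrow>
     (\<forall>x\<in>V. \<forall>y\<in>V. \<exists>p n. walk E p n \<and> p 0 = x \<and> p n = y) \<and>
     (\<forall>p q r l m k. ggeod E p l \<and> ggeod E q m \<and> ggeod E r k \<and>
        p 0 \<in> V \<and> q 0 = p l \<and> r 0 = p 0 \<and> r k = q m \<longrightarrow>
        (\<forall>i\<le>l. \<exists>j. (j \<le> m \<and> gdist E (p i) (q j) \<le> \<delta>) \<or> (j \<le> k \<and> gdist E (p i) (r j) \<le> \<delta>)))"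

definition dominated_in :: "'v set \<Rightarrow> ('v \<Rightarrow> 'v \<Rightarrow> bool) \<Rightarrow> 'v \<Rightarrow> bool" where
  "dominated_in A E a \<longleftrightarrow> (\<exists>z\<in>A. z \<noteq> a \<and> E a z \<and>
      (\<forall>x\<in>A. E a x \<and> x \<noteq> z \<longrightarrow> E z x))"

definition dismantlable :: "'v set \<Rightarrow> ('v \<Rightarrow> 'v \<Rightarrow> bool) \<Rightarrow> bool" where
  "dismantlable U E \<longleftrightarrow> finite U \<and> (\<exists>xs. distinct xs \<and> set xs = U \<and>
      (\<forall>i. i + 1 < length xs \<longrightarrow> dominated_in (set (drop i xs)) E (xs ! i)))"

definition cay_adj :: "('a, 'b) monoid_scheme \<Rightarrow> 'a set \<Rightarrow> 'a \<Rightarrow> 'a \<Rightarrow> bool" where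
  "cay_adj G S g h \<longleftrightarrow> g \<in> carrier G \<and> h \<in> carrier G \<and> g \<noteq> h \<and>
     (\<exists>s\<in>S. h = g \<otimes>\<^bsub>G\<^esub> s \<or> g = h \<otimes>\<^bsub>G\<^esub> s)"

definition wdist :: "('a, 'b) monoid_scheme \<Rightarrow> 'a set \<Rightarrow> 'a \<Rightarrow> 'a \<Rightarrow> nat" where
  "wdist G S = gdist (cay_adj G S)"

definition cosetsW :: "('a, 'b) monoid_scheme \<Rightarrow> 'a set set \<Rightarrow> 'a set set" where
  "cosetsW G Ps = {g <#\<^bsub>G\<^esub> H | g H. g \<in> carrier G \<and> H \<in> Ps}"

text \<open>V \<union> W, with V = G (Inl) and W (Inr)\<close>
definition VW :: "('a, 'b) monoid_scheme \<Rightarrow> 'a set set \<Rightarrow> ('a + 'a set) set" where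
  "VW G Ps = Inl ` carrier G \<union> Inr ` cosetsW G Ps"

fun elts :: "'a + 'a set \<Rightarrow> 'a set" where
  "elts (Inl g) = {g}"
| "elts (Inr w) = w"

definition xdist :: "('a, 'b) monoid_scheme \<Rightarrow> 'a set \<Rightarrow> 'a + 'a set \<Rightarrow> 'a + 'a set \<Rightarrow> nat" where
  "xdist G S u u' = (INF gh \<in> elts u \<times> elts u'. wdist G S (fst gh) (snd gh))"

definition coned_adj :: "('a, 'b) monoid_scheme \<Rightarrow> 'a set \<Rightarrow> 'a set set \<Rightarrow> 'a + 'a set \<Rightarrow> 'a + 'a set \<Rightarrow> bool" where
  "coned_adj G S Ps u v \<longleftrightarrow>
     (\<exists>g h. u = Inl g \<and> v = Inl h \<and> cay_adj G S g h) \<or>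
     (\<exists>g w. w \<in> cosetsW G Ps \<and> g \<in> carrier G \<and> g \<in> w \<and>
        ((u = Inl g \<and> v = Inr w) \<or> (u = Inr w \<and> v = Inl g)))"

definition rel_hyperbolic :: "('a, 'b) monoid_scheme \<Rightarrow> 'a set \<Rightarrow> 'a set set \<Rightarrow> bool" where
  "rel_hyperbolic G S Ps \<longleftrightarrow> fine_graph (VW G Ps) (coned_adj G S Ps) \<and>
     (\<exists>\<delta>. hyperbolic_graph (VW G Ps) (coned_adj G S Ps) \<delta>)"

definition cgeod :: "('a, 'b) monoid_scheme \<Rightarrow> 'a set \<Rightarrow> (nat \<Rightarrow> 'a) \<Rightarrow> nat \<Rightarrow> bool" where
  "cgeod G S p l \<longleftrightarrow> walk (cay_adj G S) p l \<and> p 0 \<in> carrier G \<and>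
     wdist G S (p 0) (p l) = l \<and> (\<forall>i\<ge>l. p i = p l)"

definition geod_from_to :: "('a, 'b) monoid_scheme \<Rightarrow> 'a set \<Rightarrow> 'a + 'a set \<Rightarrow> 'a + 'a set \<Rightarrow> (nat \<Rightarrow> 'a) \<Rightarrow> nat \<Rightarrow> bool" where
  "geod_from_to G S a b p l \<longleftrightarrow> cgeod G S p l \<and> l = xdist G S a b \<and>
     p 0 \<in> elts a \<and> p l \<in> elts b"

definition deep :: "('a, 'b) monoid_scheme \<Rightarrow> 'a set \<Rightarrow> nat \<Rightarrow> nat \<Rightarrow> (nat \<Rightarrow> 'a) \<Rightarrow> nat \<Rightarrow> nat \<Rightarrow> 'a set \<Rightarrow> bool" where
  "deep G S \<epsilon> R p l i w \<longleftrightarrow> R \<le> i \<and> i + R \<le> l \<and>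
     (\<forall>j. i \<le> j + R \<and> j \<le> i + R \<longrightarrow> xdist G S (Inl (p j)) (Inr w) \<le> \<epsilon>)"

definition thin_triangle_constants :: "('a, 'b) monoid_scheme \<Rightarrow> 'a set \<Rightarrow> 'a set set \<Rightarrow> nat \<Rightarrow> nat \<Rightarrow> nat \<Rightarrow> bool" where
  "thin_triangle_constants G S Ps \<epsilon> R D \<longleftrightarrow>
     0 < \<epsilon> \<and> 0 < R \<and> 0 < D \<and> \<epsilon> \<le> D \<and>
     (\<forall>p l i w1 w2. cgeod G S p l \<and> w1 \<in> cosetsW G Ps \<and> w2 \<in> cosetsW G Ps \<and>
        deep G S \<epsilon> R p l i w1 \<and> deep G S \<epsilon> R p l i w2 \<longrightarrow> w1 = w2) \<and>
     (\<forall>a\<in>VW G Ps. \<forall>b\<in>VW G Ps. \<forall>c\<in>VW G Ps. \<forall>pab pbc pac lab lbc lac.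
        a \<noteq> b \<and> geod_from_to G S a b pab lab \<and> geod_from_to G S b c pbc lbc \<and>
        geod_from_to G S a c pac lac \<longrightarrow>
        (\<forall>i\<le>lab.
          (\<forall>w\<in>cosetsW G Ps. deep G S \<epsilon> R pab lab i w \<longrightarrow>
             xdist G S (Inr w) (Inl (pac i)) \<le> D \<or> xdist G S (Inr w) (Inl (pbc (lab - i))) \<le> D) \<and>
          ((\<nexists>w. w \<in> cosetsW G Ps \<and> deep G S \<epsilon> R pab lab i w) \<longrightarrow>
             xdist G S (Inl (pab i)) (Inl (pac i)) \<le> D \<or>
             xdist G S (Inl (pab i)) (Inl (pbc (lab - i))) \<le> D)))"

definition convex_wrt :: "('a, 'b) monoid_scheme \<Rightarrow> 'a set \<Rightarrow> 'a set set \<Rightarrow> nat \<Rightarrow> nat \<Rightarrow> ('a + 'a set) set \<Rightarrow> 'a + 'a set \<Rightarrow> bool" where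
  "convex_wrt G S Ps \<epsilon> \<nu> U u \<longleftrightarrow> u \<in> U \<and>
     (\<forall>u'\<in>U. \<forall>p l. geod_from_to G S u u' p l \<longrightarrow>
        (\<forall>j. j + \<nu> \<le> l \<longrightarrow> Inl (p j) \<in> U \<and>
           (\<forall>w\<in>cosetsW G Ps. xdist G S (Inr w) (Inl (p j)) \<le> \<epsilon> \<longrightarrow> Inr w \<in> U)))"

definition rips_adj :: "('a, 'b) monoid_scheme \<Rightarrow> 'a set \<Rightarrow> nat \<Rightarrow> 'a + 'a set \<Rightarrow> 'a + 'a set \<Rightarrow> bool" where
  "rips_adj G S n u u' \<longleftrightarrow> u \<noteq> u' \<and> xdist G S u u' \<le> n"

end

theory Submission
  imports Defs
begin


lemma walk_gdist_le: "walk E p n \<Longrightarrow> gdist E (p 0) (p n) \<le> n"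
  unfolding gdist_def by (rule Least_le) blast

lemma walk_sub: "walk E p n \<Longrightarrow> i \<le> j \<Longrightarrow> j \<le> n \<Longrightarrow> walk E (\<lambda>k. p (i+k)) (j-i)"
  unfolding walk_def by auto

lemma walk_sub_le: "walk E p n \<Longrightarrow> i \<le> j \<Longrightarrow> j \<le> n \<Longrightarrow> gdist E (p i) (p j) \<le> j - i"
  using walk_gdist_le[OF walk_sub, of E p n i j] by simp

lemma walk_rev: "(\<And>a b. E a b \<Longrightarrow> E b a) \<Longrightarrow> walk E p n \<Longrightarrow> walk E (\<lambda>k. p (n-k)) n"
  unfolding walk_def
proof (intro allI impI)
  fix i assume s: "\<And>a b. E a b \<Longrightarrow> E b a" and w: "\<forall>i<n. E (p i) (p (Suc i))" and i: "i < n"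
  have "E (p (n - Suc i)) (p (Suc (n - Suc i)))" using w i by auto
  moreover have "Suc (n - Suc i) = n - i" using i by auto
  ultimately show "E (p (n - i)) (p (n - Suc i))" using s by metis
qed

lemma walk_app: "walk E p m \<Longrightarrow> walk E q k \<Longrightarrow> p m = q 0 \<Longrightarrow>
   walk E (\<lambda>i. if i \<le> m then p i else q (i-m)) (m+k)"
  unfolding walk_def
proof (intro allI impI)
  fix i assume w1: "\<forall>i<m. E (p i) (p (Suc i))" and w2: "\<forall>i<k. E (q i) (q (Suc i))"
    and e: "p m = q 0" and i: "i < m + k"
  show "E (if i \<le> m then p i else q (i - m)) (if Suc i \<le> m then p (Suc i) else q (Suc i - m))"
  proof (cases "i < m")
    case True thus ?thesis using w1 by auto
  next
    case False
    hence "Suc i - m = Suc (i - m)" by auto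
    thus ?thesis using False w2 i e by (cases "i = m") auto
  qed
qed

lemma gdist_sym:
  assumes s: "\<And>a b. E a b \<Longrightarrow> E b a" shows "gdist E x y = gdist E y x"
proof -
  have "(\<exists>p. walk E p n \<and> p 0 = x \<and> p n = y) \<longleftrightarrow> (\<exists>p. walk E p n \<and> p 0 = y \<and> p n = x)" for n x y
  proof -
    have *: "(\<exists>p. walk E p n \<and> p 0 = x \<and> p n = y) \<Longrightarrow> (\<exists>p. walk E p n \<and> p 0 = y \<and> p n = x)" for x y
    proof -
      assume "\<exists>p. walk E p n \<and> p 0 = x \<and> p n = y"
      then obtain p where "walk E p n" "p 0 = x" "p n = y" by blast
      thus ?thesis using walk_rev[where E=E and p=p and n=n, OF s] by (intro exI[of _ "\<lambda>k. p (n-k)"]) auto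
    qed
    show ?thesis using *[of x y] *[of y x] by blast
  qed
  thus ?thesis unfolding gdist_def by simp
qed

lemma gdist_ex: "\<exists>p n. walk E p n \<and> p 0 = x \<and> p n = y \<Longrightarrow>
    \<exists>p. walk E p (gdist E x y) \<and> p 0 = x \<and> p (gdist E x y) = y"
  unfolding gdist_def by (rule LeastI_ex) blast

lemma gdist_tri:
  assumes "\<exists>p n. walk E p n \<and> p 0 = x \<and> p n = y" "\<exists>p n. walk E p n \<and> p 0 = y \<and> p n = z"
  shows "gdist E x z \<le> gdist E x y + gdist E y z"
proof -
  obtain p where p: "walk E p (gdist E x y)" "p 0 = x" "p (gdist E x y) = y" using gdist_ex[OF assms(1)] by blast
  obtain q where q: "walk E q (gdist E y z)" "q 0 = y" "q (gdist E y z) = z" using gdist_ex[OF assms(2)] by blast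
  have w: "walk E (\<lambda>i. if i \<le> gdist E x y then p i else q (i - gdist E x y)) (gdist E x y + gdist E y z)"
    using walk_app[OF p(1) q(1)] p q by simp
  show ?thesis using walk_gdist_le[OF w] p q by (simp split: if_splits)
qed




lemma cay_sym: "cay_adj G S a b \<Longrightarrow> cay_adj G S b a"
  unfolding cay_adj_def by auto

lemma wdist_sym: "wdist G S x y = wdist G S y x"
  unfolding wdist_def by (rule gdist_sym) (rule cay_sym)

lemma walk_carrier: "walk (cay_adj G S) p n \<Longrightarrow> p 0 \<in> carrier G \<Longrightarrow> i \<le> n \<Longrightarrow> p i \<in> carrier G"
  by (induction i) (auto simp: walk_def cay_adj_def)

lemma cay_step:
  assumes "group G" "S \<subseteq> carrier G" "k \<in> generate G S"
  shows "\<forall>g\<in>carrier G. \<exists>p n. walk (cay_adj G S) p n \<and> p 0 = g \<and> p n = g \<otimes>\<^bsub>G\<^esub> k"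
  using assms(3)
proof (induction k rule: generate.induct)
  case one
  show ?case using assms(1) by (auto intro!: exI[of _ 0] simp: walk_def group.is_monoid monoid.r_one)
next
  case (incl s)
  show ?case
  proof
    fix g assume g: "g \<in> carrier G"
    show "\<exists>p n. walk (cay_adj G S) p n \<and> p 0 = g \<and> p n = g \<otimes>\<^bsub>G\<^esub> s"
    proof (cases "g = g \<otimes>\<^bsub>G\<^esub> s")
      case True thus ?thesis by (intro exI[of _ "\<lambda>_. g"] exI[of _ 0]) (auto simp: walk_def)
    next
      case False
      have "cay_adj G S g (g \<otimes>\<^bsub>G\<^esub> s)" unfolding cay_adj_def using False g incl assms
        by (auto intro: monoid.m_closed group.is_monoid)
      thus ?thesis using False
        by (intro exI[of _ "\<lambda>i. if i = 0 then g else g \<otimes>\<^bsub>G\<^esub> s"] exI[of _ 1]) (auto simp: walk_def)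
    qed
  qed
next
  case (inv s)
  interpret group G by fact
  show ?case
  proof
    fix g assume g: "g \<in> carrier G"
    have sc: "s \<in> carrier G" using inv assms by auto
    show "\<exists>p n. walk (cay_adj G S) p n \<and> p 0 = g \<and> p n = g \<otimes>\<^bsub>G\<^esub> inv\<^bsub>G\<^esub> s"
    proof (cases "g = g \<otimes>\<^bsub>G\<^esub> inv\<^bsub>G\<^esub> s")
      case True thus ?thesis by (intro exI[of _ "\<lambda>_. g"] exI[of _ 0]) (auto simp: walk_def)
    next
      case False
      have "g = (g \<otimes>\<^bsub>G\<^esub> inv\<^bsub>G\<^esub> s) \<otimes>\<^bsub>G\<^esub> s" using g sc by (simp add: m_assoc)
      hence "cay_adj G S g (g \<otimes>\<^bsub>G\<^esub> inv\<^bsub>G\<^esub> s)" unfolding cay_adj_def using False g inv sc by auto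
      thus ?thesis using False
        by (intro exI[of _ "\<lambda>i. if i = 0 then g else g \<otimes>\<^bsub>G\<^esub> inv\<^bsub>G\<^esub> s"] exI[of _ 1]) (auto simp: walk_def)
    qed
  qed
next
  case (eng h1 h2)
  interpret group G by fact
  have c1: "h1 \<in> carrier G" and c2: "h2 \<in> carrier G" using eng generate_in_carrier assms(2) by auto
  show ?case
  proof
    fix g assume g: "g \<in> carrier G"
    obtain p m where p: "walk (cay_adj G S) p m" "p 0 = g" "p m = g \<otimes>\<^bsub>G\<^esub> h1" using eng g by blast
    obtain q k where q: "walk (cay_adj G S) q k" "q 0 = g \<otimes>\<^bsub>G\<^esub> h1" "q k = (g \<otimes>\<^bsub>G\<^esub> h1) \<otimes>\<^bsub>G\<^esub> h2"
      using eng g c1 by (meson m_closed)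
    show "\<exists>p n. walk (cay_adj G S) p n \<and> p 0 = g \<and> p n = g \<otimes>\<^bsub>G\<^esub> (h1 \<otimes>\<^bsub>G\<^esub> h2)"
      using walk_app[OF p(1) q(1)] p q g c1 c2
      by (intro exI[of _ "\<lambda>i. if i \<le> m then p i else q (i-m)"] exI[of _ "m+k"]) (auto simp: m_assoc)
  qed
qed

lemma cay_conn:
  assumes "group G" "S \<subseteq> carrier G" "generate G S = carrier G" "g \<in> carrier G" "h \<in> carrier G"
  shows "\<exists>p n. walk (cay_adj G S) p n \<and> p 0 = g \<and> p n = h"
proof -
  interpret group G by fact
  have "inv\<^bsub>G\<^esub> g \<otimes>\<^bsub>G\<^esub> h \<in> generate G S" using assms by auto
  from cay_step[OF assms(1,2) this] assms(4) obtain p n where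
    "walk (cay_adj G S) p n" "p 0 = g" "p n = g \<otimes>\<^bsub>G\<^esub> (inv\<^bsub>G\<^esub> g \<otimes>\<^bsub>G\<^esub> h)" by blast
  moreover have "g \<otimes>\<^bsub>G\<^esub> (inv\<^bsub>G\<^esub> g \<otimes>\<^bsub>G\<^esub> h) = h" using assms(4,5) by (simp add: m_assoc[symmetric])
  ultimately show ?thesis by auto
qed

lemma wdist_tri:
  assumes "group G" "S \<subseteq> carrier G" "generate G S = carrier G"
    "x \<in> carrier G" "y \<in> carrier G" "z \<in> carrier G"
  shows "wdist G S x z \<le> wdist G S x y + wdist G S y z"
  unfolding wdist_def by (rule gdist_tri; rule cay_conn; fact)




locale cay =
  fixes G :: "('a, 'b) monoid_scheme" and S :: "'a set" and Ps :: "'a set set"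
  assumes grp: "group G" and Ssub: "S \<subseteq> carrier G" and gen: "generate G S = carrier G"
    and sub: "\<forall>H\<in>Ps. subgroup H G"
begin

lemma wtri: "x \<in> carrier G \<Longrightarrow> y \<in> carrier G \<Longrightarrow> z \<in> carrier G \<Longrightarrow>
   wdist G S x z \<le> wdist G S x y + wdist G S y z"
  using wdist_tri[OF grp Ssub gen] by blast

lemma elts_VW: assumes "u \<in> VW G Ps" shows "elts u \<subseteq> carrier G" "elts u \<noteq> {}"
proof -
  interpret group G by (rule grp)
  have "elts u \<subseteq> carrier G \<and> elts u \<noteq> {}"
  proof (cases u)
    case (Inl g) thus ?thesis using assms by (auto simp: VW_def)
  next
    case (Inr w)
    then obtain g H where w: "w = g <#\<^bsub>G\<^esub> H" "g \<in> carrier G" "H \<in> Ps"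
      using assms by (auto simp: VW_def cosetsW_def)
    interpret subgroup H G using sub w by auto
    have "g \<otimes>\<^bsub>G\<^esub> \<one>\<^bsub>G\<^esub> \<in> w" using w by (auto simp: l_coset_def)
    moreover have "w \<subseteq> carrier G" using w by (auto simp: l_coset_def)
    ultimately show ?thesis using Inr by auto
  qed
  thus "elts u \<subseteq> carrier G" "elts u \<noteq> {}" by auto
qed

lemma xdist_le: "g \<in> elts u \<Longrightarrow> h \<in> elts v \<Longrightarrow> xdist G S u v \<le> wdist G S g h"
  unfolding xdist_def by (rule cINF_lower[where f="\<lambda>gh. wdist G S (fst gh) (snd gh)" and x="(g,h)", simplified]) auto

lemma xdist_attain: assumes "elts u \<noteq> {}" "elts v \<noteq> {}"
  shows "\<exists>g\<in>elts u. \<exists>h\<in>elts v. xdist G S u v = wdist G S g h"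
proof -
  have "xdist G S u v \<in> (\<lambda>gh. wdist G S (fst gh) (snd gh)) ` (elts u \<times> elts v)"
    unfolding xdist_def by (rule Inf_nat_def1) (use assms in auto)
  thus ?thesis by force
qed

lemma xdist_sym: assumes "elts u \<noteq> {}" "elts v \<noteq> {}" shows "xdist G S u v = xdist G S v u"
proof -
  obtain g h where "g\<in>elts u" "h\<in>elts v" "xdist G S u v = wdist G S g h" using xdist_attain assms by blast
  moreover obtain g' h' where "g'\<in>elts u" "h'\<in>elts v" "xdist G S v u = wdist G S h' g'" using xdist_attain assms by blast
  moreover have "xdist G S v u \<le> wdist G S h g" using xdist_le \<open>g\<in>elts u\<close> \<open>h\<in>elts v\<close> by blast
  moreover have "xdist G S u v \<le> wdist G S g' h'" using xdist_le \<open>g'\<in>elts u\<close> \<open>h'\<in>elts v\<close> by blast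
  ultimately show ?thesis using wdist_sym[of G S] by (metis le_antisym)
qed

lemma xdist_symV: "u \<in> VW G Ps \<Longrightarrow> v \<in> VW G Ps \<Longrightarrow> xdist G S u v = xdist G S v u"
  using xdist_sym elts_VW by blast

lemma xdist_tri: assumes "u \<in> VW G Ps" "g \<in> carrier G" "h \<in> elts v" "h \<in> carrier G"
  shows "xdist G S u v \<le> xdist G S u (Inl g) + wdist G S g h"
proof -
  obtain k where k: "k \<in> elts u" "xdist G S u (Inl g) = wdist G S k g"
    using xdist_attain[of u "Inl g"] elts_VW[OF assms(1)] by auto
  have "k \<in> carrier G" using k elts_VW[OF assms(1)] by auto
  hence "wdist G S k h \<le> wdist G S k g + wdist G S g h" using wtri assms by blast
  moreover have "xdist G S u v \<le> wdist G S k h" using xdist_le k assms by blast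
  ultimately show ?thesis using k by simp
qed

lemma geod_exists: assumes "a \<in> VW G Ps" "c \<in> VW G Ps"
  shows "\<exists>p. geod_from_to G S a c p (xdist G S a c)"
proof -
  obtain g h where gh: "g\<in>elts a" "h\<in>elts c" "xdist G S a c = wdist G S g h"
    using xdist_attain[OF elts_VW(2)[OF assms(1)] elts_VW(2)[OF assms(2)]] by blast
  have gc: "g \<in> carrier G" "h \<in> carrier G" using gh elts_VW(1)[OF assms(1)] elts_VW(1)[OF assms(2)] by auto
  obtain p where p: "walk (cay_adj G S) p (wdist G S g h)" "p 0 = g" "p (wdist G S g h) = h"
  proof -
    have "\<exists>p. walk (cay_adj G S) p (gdist (cay_adj G S) g h) \<and> p 0 = g \<and> p (gdist (cay_adj G S) g h) = h"
      by (rule gdist_ex[OF cay_conn[OF grp Ssub gen gc]])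
    thus ?thesis using that unfolding wdist_def by blast
  qed
  define l where "l = wdist G S g h"
  define q where "q i = p (min i l)" for i
  have w: "walk (cay_adj G S) q l" using p(1) unfolding walk_def
  proof (intro allI impI)
    fix i assume "\<forall>i<wdist G S g h. cay_adj G S (p i) (p (Suc i))" "i < l"
    thus "cay_adj G S (q i) (q (Suc i))" unfolding q_def l_def by simp
  qed
  have q0: "q 0 = g" using p(2) by (simp add: q_def)
  have ql: "q l = h" using p(3) by (simp add: q_def l_def)
  have qc: "\<forall>i\<ge>l. q i = q l" by (simp add: q_def)
  have wd: "wdist G S (q 0) (q l) = l" using q0 ql l_def by simp
  have lx: "l = xdist G S a c" using gh(3) l_def by simp
  have "geod_from_to G S a c q l" unfolding geod_from_to_def cgeod_def
    apply (intro conjI)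
    apply (rule w)
    using gc(1) q0 apply simp
    apply (rule wd)
    apply (rule qc)
    apply (rule lx)
    using gh(1) q0 apply simp
    using gh(2) ql apply simp
    done
  thus ?thesis using lx by auto
qed

end



lemma gdist_refl: "gdist E x x = 0"
  using walk_gdist_le[of E "\<lambda>_. x" 0] by (simp add: walk_def)

lemma wdist_refl: "wdist G S x x = 0"
  unfolding wdist_def by (rule gdist_refl)

lemma cgeod_const: "cgeod G S p l \<Longrightarrow> l \<le> i \<Longrightarrow> p i = p l"
  unfolding cgeod_def by blast

lemma cgeod_seg: assumes "cgeod G S p l" "i \<le> j" shows "wdist G S (p i) (p j) \<le> j - i"
proof -
  have w: "walk (cay_adj G S) p l" using assms(1) unfolding cgeod_def by blast
  show ?thesis
  proof (cases "j \<le> l")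
    case True thus ?thesis using walk_sub_le[OF w assms(2)] unfolding wdist_def by simp
  next
    case False
    have pj: "p j = p l" by (rule cgeod_const[OF assms(1)]) (use False in simp)
    show ?thesis
    proof (cases "i \<le> l")
      case True
      have "wdist G S (p i) (p l) \<le> l - i" using walk_sub_le[OF w True] unfolding wdist_def by simp
      thus ?thesis using pj False by simp
    next
      case False
      have "p i = p l" by (rule cgeod_const[OF assms(1)]) (use False in simp)
      thus ?thesis using pj by (simp add: wdist_refl)
    qed
  qed
qed

lemma cgeod_tail: assumes "cgeod G S p l" shows "wdist G S (p i) (p l) \<le> l - i"
proof (cases "i \<le> l")
  case True thus ?thesis using cgeod_seg[OF assms True] by simp
next
  case False
  have "p i = p l" by (rule cgeod_const[OF assms]) (use False in simp)
  thus ?thesis by (simp add: wdist_refl)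
qed

lemma cgeod_carrier: assumes "cgeod G S p l" shows "p i \<in> carrier G"
proof -
  have w: "walk (cay_adj G S) p l" and c: "p 0 \<in> carrier G"
    using assms unfolding cgeod_def by auto
  show ?thesis
  proof (cases "i \<le> l")
    case True thus ?thesis using walk_carrier[OF w c] by blast
  next
    case False
    have "p i = p l" by (rule cgeod_const[OF assms]) (use False in simp)
    thus ?thesis using walk_carrier[OF w c, of l] by simp
  qed
qed

context cay begin

lemma geod_rev: assumes "geod_from_to G S a c p l" "a \<in> VW G Ps" "c \<in> VW G Ps"
  shows "geod_from_to G S c a (\<lambda>k. p (l - k)) l"
proof -
  have cg: "cgeod G S p l" and lx: "l = xdist G S a c" and pa: "p 0 \<in> elts a" and pc: "p l \<in> elts c"
    using assms(1) unfolding geod_from_to_def by auto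
  have w: "walk (cay_adj G S) p l" and wd: "wdist G S (p 0) (p l) = l"
    using cg unfolding cgeod_def by blast+
  have "walk (cay_adj G S) (\<lambda>k. p (l - k)) l" by (rule walk_rev[OF _ w]) (rule cay_sym)
  moreover have "p (l - 0) \<in> carrier G" using cgeod_carrier[OF cg] by blast
  moreover have "wdist G S (p (l - 0)) (p (l - l)) = l" using wd wdist_sym[of G S] by simp
  moreover have "\<forall>i\<ge>l. p (l - i) = p (l - l)" by simp
  moreover have "l = xdist G S c a" using lx xdist_symV[OF assms(2,3)] by simp
  ultimately show ?thesis unfolding geod_from_to_def cgeod_def using pa pc by (intro conjI) simp_all
qed

lemma Inl_VW: "g \<in> carrier G \<Longrightarrow> Inl g \<in> VW G Ps"
  unfolding VW_def by auto

lemma Inr_VW: "w \<in> cosetsW G Ps \<Longrightarrow> Inr w \<in> VW G Ps"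
  unfolding VW_def by auto

lemma xdist_Inl_le: "g \<in> elts u \<Longrightarrow> xdist G S u (Inl h) \<le> wdist G S g h"
  using xdist_le[of g u h "Inl h"] by simp

end



context cay begin

lemma dom:
  assumes thin: "thin_triangle_constants G S Ps \<epsilon> R D" and nD: "7*D \<le> n"
    and UV: "U \<subseteq> VW G Ps" and bU: "b \<in> U" and conv: "convex_wrt G S Ps \<epsilon> (6*D) U b"
    and uU: "u \<in> U" and ub: "u \<noteq> b" and umax: "\<forall>x\<in>U. xdist G S b x \<le> xdist G S b u"
  shows "dominated_in U (rips_adj G S n) u"
proof -
  have Dpos: "0 < D" and eD: "\<epsilon> \<le> D" using thin unfolding thin_triangle_constants_def by auto
  have thin3: "\<forall>a\<in>VW G Ps. \<forall>b\<in>VW G Ps. \<forall>c\<in>VW G Ps. \<forall>pab pbc pac lab lbc lac.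
        a \<noteq> b \<and> geod_from_to G S a b pab lab \<and> geod_from_to G S b c pbc lbc \<and>
        geod_from_to G S a c pac lac \<longrightarrow>
        (\<forall>i\<le>lab.
          (\<forall>w\<in>cosetsW G Ps. deep G S \<epsilon> R pab lab i w \<longrightarrow>
             xdist G S (Inr w) (Inl (pac i)) \<le> D \<or> xdist G S (Inr w) (Inl (pbc (lab - i))) \<le> D) \<and>
          ((\<nexists>w. w \<in> cosetsW G Ps \<and> deep G S \<epsilon> R pab lab i w) \<longrightarrow>
             xdist G S (Inl (pab i)) (Inl (pac i)) \<le> D \<or>
             xdist G S (Inl (pab i)) (Inl (pbc (lab - i))) \<le> D))"
    using thin unfolding thin_triangle_constants_def by (elim conjE) assumption
  have convU: "\<forall>u'\<in>U. \<forall>p l. geod_from_to G S b u' p l \<longrightarrow>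
        (\<forall>j. j + 6*D \<le> l \<longrightarrow> Inl (p j) \<in> U \<and>
           (\<forall>w\<in>cosetsW G Ps. xdist G S (Inr w) (Inl (p j)) \<le> \<epsilon> \<longrightarrow> Inr w \<in> U))"
    using conv unfolding convex_wrt_def by (elim conjE) assumption
  have bV: "b \<in> VW G Ps" and uV: "u \<in> VW G Ps" using UV bU uU by auto
  define L where "L = xdist G S b u"
  show ?thesis
  proof (cases "L \<le> n")
    case True
    have "rips_adj G S n u b" unfolding rips_adj_def using ub True xdist_symV[OF bV uV] L_def by simp
    moreover have "rips_adj G S n b x" if "x \<in> U" "x \<noteq> b" for x
      unfolding rips_adj_def using that umax True L_def by fastforce
    ultimately show ?thesis unfolding dominated_in_def using bU ub by (intro bexI[of _ b]) auto
  next
    case False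
    hence Lbig: "n < L" by simp
    obtain p where pg: "geod_from_to G S b u p L" using geod_exists[OF bV uV] L_def by blast
    have pcg: "cgeod G S p L" and p0: "p 0 \<in> elts b" and pL: "p L \<in> elts u"
      using pg unfolding geod_from_to_def by auto
    have pc: "\<And>i. p i \<in> carrier G" using cgeod_carrier[OF pcg] .
    define z0 where "z0 = p (L - 6*D)"
    have L6: "6*D \<le> L" using Lbig nD by simp
    have cinst: "Inl (p (L - 6*D)) \<in> U \<and>
           (\<forall>w\<in>cosetsW G Ps. xdist G S (Inr w) (Inl (p (L - 6*D))) \<le> \<epsilon> \<longrightarrow> Inr w \<in> U)"
      using convU[rule_format, OF uU pg, of "L - 6*D"] L6 by simp
    have z0U: "Inl z0 \<in> U" and z0w: "\<And>w. w \<in> cosetsW G Ps \<Longrightarrow> xdist G S (Inr w) (Inl z0) \<le> \<epsilon> \<Longrightarrow> Inr w \<in> U"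
      using cinst unfolding z0_def by auto
    have zc: "z0 \<in> carrier G" using pc z0_def by simp
    have d0: "wdist G S z0 (p 0) \<le> L - 6*D"
      using cgeod_seg[OF pcg, of 0 "L - 6*D"] wdist_sym[of G S] z0_def by simp
    have dL: "wdist G S z0 (p L) \<le> 6*D"
      using cgeod_tail[OF pcg, of "L - 6*D"] z0_def L6 by simp
    define q where "q k = p (L - k)" for k
    have qg: "geod_from_to G S u b q L" unfolding q_def by (rule geod_rev[OF pg bV uV])
    have q6: "q (6*D) = z0" unfolding q_def z0_def ..
    define dp where "dp = (\<exists>w. w \<in> cosetsW G Ps \<and> deep G S \<epsilon> R q L (6*D) w)"
    define A where "A = (if dp then Inr (SOME w. w \<in> cosetsW G Ps \<and> deep G S \<epsilon> R q L (6*D) w) else Inl z0)"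
    have Aprop: "A \<in> U \<and> A \<in> VW G Ps \<and> xdist G S A (Inl z0) \<le> \<epsilon>"
    proof (cases dp)
      case True
      define w where "w = (SOME w. w \<in> cosetsW G Ps \<and> deep G S \<epsilon> R q L (6*D) w)"
      have wp: "w \<in> cosetsW G Ps \<and> deep G S \<epsilon> R q L (6*D) w"
        using True unfolding dp_def w_def by (rule someI_ex)
      hence "xdist G S (Inl (q (6*D))) (Inr w) \<le> \<epsilon>" unfolding deep_def by auto
      hence e: "xdist G S (Inr w) (Inl z0) \<le> \<epsilon>"
        using xdist_symV[OF Inl_VW[OF zc] Inr_VW[of w]] wp q6 by simp
      have "A = Inr w" using True unfolding A_def w_def by simp
      thus ?thesis using e z0w wp Inr_VW by auto
    next
      case False
      hence "A = Inl z0" unfolding A_def by simp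
      thus ?thesis using z0U Inl_VW[OF zc] xdist_Inl_le[of z0 "Inl z0" z0] wdist_refl[of G S z0] by simp
    qed
    hence AU: "A \<in> U" and AV: "A \<in> VW G Ps" and Az: "xdist G S A (Inl z0) \<le> \<epsilon>" by auto
    have "xdist G S A b \<le> xdist G S A (Inl z0) + wdist G S z0 (p 0)"
      by (rule xdist_tri[OF AV zc p0 pc])
    hence "xdist G S b A \<le> \<epsilon> + (L - 6*D)" using Az d0 xdist_symV[OF AV bV] by simp
    hence Au: "A \<noteq> u" using L_def eD Dpos L6 by auto
    have "xdist G S A u \<le> xdist G S A (Inl z0) + wdist G S z0 (p L)"
      by (rule xdist_tri[OF AV zc pL pc])
    hence "xdist G S u A \<le> n" using Az dL eD nD xdist_symV[OF AV uV] by simp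
    hence uA: "rips_adj G S n u A" unfolding rips_adj_def using Au by simp
    have "rips_adj G S n A x" if xU: "x \<in> U" and ux: "rips_adj G S n u x" and xA: "x \<noteq> A" for x
    proof -
      have xV: "x \<in> VW G Ps" using xU UV by auto
      obtain r where rg: "geod_from_to G S b x r (xdist G S b x)" using geod_exists[OF bV xV] by blast
      obtain s where sg: "geod_from_to G S u x s (xdist G S u x)" using geod_exists[OF uV xV] by blast
      define lbx where "lbx = xdist G S b x"
      define lux where "lux = xdist G S u x"
      have lbxL: "lbx \<le> L" using umax xU L_def lbx_def by simp
      have luxn: "lux \<le> n" using ux unfolding rips_adj_def lux_def by simp
      have rcg: "cgeod G S r lbx" and rx: "r lbx \<in> elts x" using rg unfolding geod_from_to_def lbx_def by auto
      have scg: "cgeod G S s lux" and sx: "s lux \<in> elts x" using sg unfolding geod_from_to_def lux_def by auto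
      have T: "(\<forall>w\<in>cosetsW G Ps. deep G S \<epsilon> R q L (6*D) w \<longrightarrow>
             xdist G S (Inr w) (Inl (s (6*D))) \<le> D \<or> xdist G S (Inr w) (Inl (r (L - 6*D))) \<le> D) \<and>
          ((\<nexists>w. w \<in> cosetsW G Ps \<and> deep G S \<epsilon> R q L (6*D) w) \<longrightarrow>
             xdist G S (Inl (q (6*D))) (Inl (s (6*D))) \<le> D \<or>
             xdist G S (Inl (q (6*D))) (Inl (r (L - 6*D))) \<le> D)"
        using thin3 uV bV xV ub qg rg sg L6 unfolding lbx_def lux_def by blast
      have AD: "xdist G S A (Inl (s (6*D))) \<le> D \<or> xdist G S A (Inl (r (L - 6*D))) \<le> D"
      proof (cases dp)
        case True
        define w where "w = (SOME w. w \<in> cosetsW G Ps \<and> deep G S \<epsilon> R q L (6*D) w)"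
        have wp: "w \<in> cosetsW G Ps \<and> deep G S \<epsilon> R q L (6*D) w"
          using True unfolding dp_def w_def by (rule someI_ex)
        have "A = Inr w" using True unfolding A_def w_def by simp
        thus ?thesis using T wp by simp
      next
        case False
        hence "A = Inl z0" unfolding A_def by simp
        thus ?thesis using T False q6 unfolding dp_def by simp
      qed
      have "xdist G S A x \<le> n"
        using AD
      proof
        assume h: "xdist G S A (Inl (s (6*D))) \<le> D"
        have "xdist G S A x \<le> xdist G S A (Inl (s (6*D))) + wdist G S (s (6*D)) (s lux)"
          by (rule xdist_tri[OF AV cgeod_carrier[OF scg] sx cgeod_carrier[OF scg]])
        moreover have "wdist G S (s (6*D)) (s lux) \<le> lux - 6*D" by (rule cgeod_tail[OF scg])
        ultimately show ?thesis using h luxn nD by linarith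
      next
        assume h: "xdist G S A (Inl (r (L - 6*D))) \<le> D"
        have "xdist G S A x \<le> xdist G S A (Inl (r (L - 6*D))) + wdist G S (r (L - 6*D)) (r lbx)"
          by (rule xdist_tri[OF AV cgeod_carrier[OF rcg] rx cgeod_carrier[OF rcg]])
        moreover have "wdist G S (r (L - 6*D)) (r lbx) \<le> lbx - (L - 6*D)" by (rule cgeod_tail[OF rcg])
        ultimately show ?thesis using h lbxL nD L6 by linarith
      qed
      thus ?thesis unfolding rips_adj_def using xA by simp
    qed
    thus ?thesis unfolding dominated_in_def using AU Au uA by blast
  qed
qed

end



context cay begin

lemma conv_remove:
  assumes thin: "thin_triangle_constants G S Ps \<epsilon> R D"
    and UV: "U \<subseteq> VW G Ps" and conv: "convex_wrt G S Ps \<epsilon> (6*D) U b"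
    and uU: "u \<in> U" and ub: "u \<noteq> b" and umax: "\<forall>x\<in>U. xdist G S b x \<le> xdist G S b u"
  shows "convex_wrt G S Ps \<epsilon> (6*D) (U - {u}) b"
proof -
  have Dpos: "0 < D" and eD: "\<epsilon> \<le> D" using thin unfolding thin_triangle_constants_def by auto
  have bU: "b \<in> U" using conv unfolding convex_wrt_def by blast
  have convU: "\<forall>u'\<in>U. \<forall>p l. geod_from_to G S b u' p l \<longrightarrow>
        (\<forall>j. j + 6*D \<le> l \<longrightarrow> Inl (p j) \<in> U \<and>
           (\<forall>w\<in>cosetsW G Ps. xdist G S (Inr w) (Inl (p j)) \<le> \<epsilon> \<longrightarrow> Inr w \<in> U))"
    using conv unfolding convex_wrt_def by (elim conjE) assumption
  have bV: "b \<in> VW G Ps" using UV bU by auto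
  have main: "Inl (p j) \<in> U - {u} \<and>
           (\<forall>w\<in>cosetsW G Ps. xdist G S (Inr w) (Inl (p j)) \<le> \<epsilon> \<longrightarrow> Inr w \<in> U - {u})"
    if u'U: "u' \<in> U - {u}" and pg: "geod_from_to G S b u' p l" and jl: "j + 6*D \<le> l" for u' p l j
  proof -
    have ci: "Inl (p j) \<in> U \<and>
           (\<forall>w\<in>cosetsW G Ps. xdist G S (Inr w) (Inl (p j)) \<le> \<epsilon> \<longrightarrow> Inr w \<in> U)"
      using convU[rule_format, of u' p l j] u'U pg jl by blast
    have pcg: "cgeod G S p l" and p0: "p 0 \<in> elts b" and lx: "l = xdist G S b u'"
      using pg unfolding geod_from_to_def by auto
    have pc: "\<And>i. p i \<in> carrier G" using cgeod_carrier[OF pcg] .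
    have lL: "l \<le> xdist G S b u" using umax u'U lx by simp
    have dj: "wdist G S (p j) (p 0) \<le> j" using cgeod_seg[OF pcg, of 0 j] wdist_sym[of G S] by simp
    have "xdist G S b (Inl (p j)) \<le> j" using xdist_Inl_le[OF p0, of "p j"] dj wdist_sym[of G S] by simp
    hence "Inl (p j) \<noteq> u" using lL jl Dpos by auto
    moreover have "Inr w \<noteq> u" if w: "w \<in> cosetsW G Ps" "xdist G S (Inr w) (Inl (p j)) \<le> \<epsilon>" for w
    proof -
      have "xdist G S (Inr w) b \<le> xdist G S (Inr w) (Inl (p j)) + wdist G S (p j) (p 0)"
        by (rule xdist_tri[OF Inr_VW[OF w(1)] pc p0 pc])
      hence "xdist G S b (Inr w) \<le> \<epsilon> + j" using w(2) dj xdist_symV[OF Inr_VW[OF w(1)] bV] by simp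
      thus ?thesis using lL jl Dpos eD by auto
    qed
    ultimately show ?thesis using ci by blast
  qed
  show ?thesis unfolding convex_wrt_def using bU ub main by blast
qed

lemma dism:
  assumes thin: "thin_triangle_constants G S Ps \<epsilon> R D" and nD: "7*D \<le> n"
  shows "finite U \<Longrightarrow> U \<subseteq> VW G Ps \<Longrightarrow> b \<in> U \<Longrightarrow> convex_wrt G S Ps \<epsilon> (6*D) U b \<Longrightarrow>
     dismantlable U (rips_adj G S n)"
proof (induction "card U" arbitrary: U rule: less_induct)
  case less
  show ?case
  proof (cases "U = {b}")
    case True
    show ?thesis unfolding dismantlable_def using True by (intro conjI exI[of _ "[b]"]) auto
  next
    case False
    define U' where "U' = U - {b}"
    have U'ne: "U' \<noteq> {}" and U'f: "finite U'" using False less.prems U'_def by auto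
    define M where "M = Max (xdist G S b ` U')"
    have "M \<in> xdist G S b ` U'" unfolding M_def using U'ne U'f by (intro Max_in) auto
    then obtain u where uU': "u \<in> U'" and uM: "xdist G S b u = M" by auto
    have uU: "u \<in> U" and ub: "u \<noteq> b" using uU' U'_def by auto
    have umax: "\<forall>x\<in>U. xdist G S b x \<le> xdist G S b u"
    proof
      fix x assume xU: "x \<in> U"
      show "xdist G S b x \<le> xdist G S b u"
      proof (cases "x = b")
        case True
        have bV: "b \<in> VW G Ps" using less.prems by auto
        obtain g where "g \<in> elts b" using elts_VW(2)[OF bV] by blast
        hence "xdist G S b b \<le> 0" using xdist_le[of g b g b] wdist_refl[of G S g] by simp
        thus ?thesis using True by simp
      next
        case False
        hence "x \<in> U'" using xU U'_def by auto
        thus ?thesis using uM M_def U'f by simp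
      qed
    qed
    have domu: "dominated_in U (rips_adj G S n) u"
      by (rule dom[OF thin nD]) (use less.prems uU ub umax in auto)
    define U1 where "U1 = U - {u}"
    have cv1: "convex_wrt G S Ps \<epsilon> (6*D) U1 b"
      unfolding U1_def by (rule conv_remove[OF thin]) (use less.prems uU ub umax in auto)
    have "card U1 < card U" unfolding U1_def by (rule card_Diff1_less[OF less.prems(1) uU])
    hence "dismantlable U1 (rips_adj G S n)"
      using less.hyps[of U1] less.prems cv1 ub unfolding U1_def by auto
    then obtain xs where xs: "distinct xs" "set xs = U1"
      "\<forall>i. i + 1 < length xs \<longrightarrow> dominated_in (set (drop i xs)) (rips_adj G S n) (xs ! i)"
      unfolding dismantlable_def by blast
    have "distinct (u # xs)" "set (u # xs) = U" using xs uU unfolding U1_def by auto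
    moreover have "dominated_in (set (drop i (u # xs))) (rips_adj G S n) ((u # xs) ! i)"
      if "i + 1 < length (u # xs)" for i
    proof (cases i)
      case 0 thus ?thesis using domu \<open>set (u # xs) = U\<close> by simp
    next
      case (Suc k) thus ?thesis using xs(3) that by simp
    qed
    ultimately show ?thesis unfolding dismantlable_def using less.prems(1) by blast
  qed
qed

end

theorem lemma3p13:
  fixes G :: "('a, 'b) monoid_scheme" and S :: "'a set" and Ps :: "'a set set"
    and \<epsilon> R D n :: nat and U :: "('a + 'a set) set" and b :: "'a + 'a set"
  assumes "group G"
    and "finite S" and "S \<subseteq> carrier G" and "generate G S = carrier G"
    and "finite Ps" and "\<forall>H\<in>Ps. subgroup H G"
    and "rel_hyperbolic G S Ps"
    and "thin_triangle_constants G S Ps \<epsilon> R D"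
    and "finite U" and "U \<subseteq> VW G Ps" and "b \<in> U"
    and "convex_wrt G S Ps \<epsilon> (6 * D) U b"
    and "n \<ge> 7 * D"
  shows "dismantlable U (rips_adj G S n)"
proof -
  interpret cay G S Ps using assms(1,3,4,6) by (simp add: cay_def)
  show ?thesis using dism[OF assms(8) assms(13) assms(9,10,11,12)] .
qed

end
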